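(* Let $0<t\le k<n$ be integers. (i) If a Steiner system $S(t,k,n)$ exists, then for $w=k$ and every $q\ge \binom{n-1}{t-1}/\binom{w-1}{t-1}+1$ there is an $(n,w,2w-t+1)_q$ code of size $\binom{n}{t}/\binom{w}{t}$, and it attains the code--anticode bound with the anticode $A'_q(n,w,t)$, i.e. its size times $|A'_q(n,w,t)|$ equals $|J_q(n,w)|$. Moreover the supports of its codewords are exactly the blocks of the given $S(t,k,n)$. (ii) If a Steiner system $S(t,k,n)$ exists, then for $w=n-k$ and every $q\ge \binom{n}{t}/\binom{k}{t}-\binom{n-1}{t-1}/\binom{k-1}{t-1}+1$ there is an $(n,w,n-t+1)_q$ code of size $\binom{n}{t}/\binom{n-w}{t}$, which attains the code--anticode bound with the anticode $A''_q(n,w,t)$. Moreover the complements of the supports of its codewords are exactly the blocks of the given $S(t,k,n)$. (iii) If no Steiner system $S(t,k,n)$ exists, then for no $q$ does there exist an $(n,k,2k-t+1)_q$ code of size $\binom{n}{t}/\binom{k}{t}$, nor an $(n,n-k,n-t+1)_q$ code of size $\binom{n}{t}/\binom{k}{t}$.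
   Context: $\mathbb{Z}_q=\{0,\dots,q-1\}$ (an alphabet), $[n]=\{1,\dots,n\}$; $\mathrm{supp}(x)=\{i:x_i\ne0\}$, $\mathrm{wt}(x)=|\mathrm{supp}(x)|$, $d$ = Hamming distance; $J_q(n,w)$ = weight-$w$ words of $\mathbb{Z}_q^n$. An $(n,w,d)_q$ code of size $M$ is a subset $C\subseteq J_q(n,w)$ with $|C|=M\ge 2$ and $d(x,y)\ge d$ for all distinct $x,y\in C$. A Steiner system $S(t,k,n)$ ($0<t\le k<n$) is a pair $(N,B)$ with $|N|=n$ and $B$ a set of $k$-subsets of $N$ (blocks) such that every $t$-subset of $N$ is contained in exactly one block. The anticodes are $A'_q(n,w,t)=\{a\in\mathbb{Z}_q^n: \mathrm{wt}((a_1,\dots,a_t))=t,\ \mathrm{wt}((a_{t+1},\dots,a_n))=w-t\}$ and $A''_q(n,w,t)=\{a\in\mathbb{Z}_q^n: a_1=\dots=a_t=0,\ \mathrm{wt}((a_{t+1},\dots,a_n))=w\}$; they have diameters $2w-t$ and $n-t$ respectively. A code attains the code--anticode bound with anticode $A$ if $|C|\cdot|A|=|J_q(n,w)|$. *)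

theory Defs
  imports Complex_Main
begin

text \<open>Words of \<Z>_q^n are functions nat => nat, with coordinates 1..n taking values
  in {0..<q} and all other coordinates equal to 0.\<close>

definition words :: "nat \<Rightarrow> nat \<Rightarrow> (nat \<Rightarrow> nat) set" where
  "words q n = {x. (\<forall>i\<in>{1..n}. x i < q) \<and> (\<forall>i. i \<notin> {1..n} \<longrightarrow> x i = 0)}"

definition supp :: "nat \<Rightarrow> (nat \<Rightarrow> nat) \<Rightarrow> nat set" where
  "supp n x = {i\<in>{1..n}. x i \<noteq> 0}"

definition wt :: "nat \<Rightarrow> (nat \<Rightarrow> nat) \<Rightarrow> nat" where
  "wt n x = card (supp n x)"

definition hdist :: "nat \<Rightarrow> (nat \<Rightarrow> nat) \<Rightarrow> (nat \<Rightarrow> nat) \<Rightarrow> nat" where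
  "hdist n x y = card {i\<in>{1..n}. x i \<noteq> y i}"

definition Jq :: "nat \<Rightarrow> nat \<Rightarrow> nat \<Rightarrow> (nat \<Rightarrow> nat) set" where
  "Jq q n w = {x \<in> words q n. wt n x = w}"

definition is_code :: "nat \<Rightarrow> nat \<Rightarrow> nat \<Rightarrow> nat \<Rightarrow> (nat \<Rightarrow> nat) set \<Rightarrow> bool" where
  "is_code q n w d C \<longleftrightarrow> C \<subseteq> Jq q n w \<and> finite C \<and> card C \<ge> 2 \<and>
     (\<forall>x\<in>C. \<forall>y\<in>C. x \<noteq> y \<longrightarrow> hdist n x y \<ge> d)"

definition steiner_system :: "nat \<Rightarrow> nat \<Rightarrow> nat \<Rightarrow> 'a set \<Rightarrow> 'a set set \<Rightarrow> bool" where
  "steiner_system t k n N B \<longleftrightarrow> 0 < t \<and> t \<le> k \<and> k < n \<and> finite N \<and> card N = n \<and>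
     (\<forall>b\<in>B. b \<subseteq> N \<and> card b = k) \<and>
     (\<forall>T. T \<subseteq> N \<and> card T = t \<longrightarrow> (\<exists>!b. b \<in> B \<and> T \<subseteq> b))"

definition anticode1 :: "nat \<Rightarrow> nat \<Rightarrow> nat \<Rightarrow> nat \<Rightarrow> (nat \<Rightarrow> nat) set" where
  "anticode1 q n w t = {a \<in> words q n. (\<forall>i\<in>{1..t}. a i \<noteq> 0) \<and>
      card {i\<in>{t+1..n}. a i \<noteq> 0} = w - t}"

definition anticode2 :: "nat \<Rightarrow> nat \<Rightarrow> nat \<Rightarrow> nat \<Rightarrow> (nat \<Rightarrow> nat) set" where
  "anticode2 q n w t = {a \<in> words q n. (\<forall>i\<in>{1..t}. a i = 0) \<and>
      card {i\<in>{t+1..n}. a i \<noteq> 0} = w}"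

end

theory Submission imports Defs "HOL-Library.FuncSet" begin


lemma card_supersets:
  assumes "finite A" "S \<subseteq> A" "card S \<le> t"
  shows "card {T. S \<subseteq> T \<and> T \<subseteq> A \<and> card T = t} = (card A - card S) choose (t - card S)"
proof -
  have fS: "finite S" using assms finite_subset by blast
  have "bij_betw (\<lambda>U. S \<union> U) {U. U \<subseteq> A - S \<and> card U = t - card S} {T. S \<subseteq> T \<and> T \<subseteq> A \<and> card T = t}"
  proof (rule bij_betw_byWitness[where f'="\<lambda>T. T - S"])
    show "\<forall>a\<in>{U. U \<subseteq> A - S \<and> card U = t - card S}. S \<union> a - S = a" by blast
    show "\<forall>a'\<in>{T. S \<subseteq> T \<and> T \<subseteq> A \<and> card T = t}. S \<union> (a' - S) = a'" by blast
    show "(\<lambda>U. S \<union> U) ` {U. U \<subseteq> A - S \<and> card U = t - card S} \<subseteq> {T. S \<subseteq> T \<and> T \<subseteq> A \<and> card T = t}"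
    proof (rule image_subsetI)
      fix U assume "U \<in> {U. U \<subseteq> A - S \<and> card U = t - card S}"
      hence U: "U \<subseteq> A - S" "card U = t - card S" by auto
      have fU: "finite U" using U(1) assms(1) finite_subset by blast
      have d: "S \<inter> U = {}" using U(1) by blast
      have "card (S \<union> U) = card S + card U" using card_Un_disjoint[OF fS fU d] .
      also have "\<dots> = t" using U(2) assms(3) by simp
      finally have "card (S \<union> U) = t" .
      moreover have "S \<union> U \<subseteq> A" using U(1) assms(2) by blast
      ultimately show "S \<union> U \<in> {T. S \<subseteq> T \<and> T \<subseteq> A \<and> card T = t}" by blast
    qed
    show "(\<lambda>T. T - S) ` {T. S \<subseteq> T \<and> T \<subseteq> A \<and> card T = t} \<subseteq> {U. U \<subseteq> A - S \<and> card U = t - card S}"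
    proof (rule image_subsetI)
      fix T assume "T \<in> {T. S \<subseteq> T \<and> T \<subseteq> A \<and> card T = t}"
      hence T: "S \<subseteq> T" "T \<subseteq> A" "card T = t" by auto
      have "card (T - S) = card T - card S" using card_Diff_subset[OF fS T(1)] .
      moreover have "T - S \<subseteq> A - S" using T(2) by blast
      ultimately show "T - S \<in> {U. U \<subseteq> A - S \<and> card U = t - card S}" using T(3) by blast
    qed
  qed
  hence "card {T. S \<subseteq> T \<and> T \<subseteq> A \<and> card T = t} = card {U. U \<subseteq> A - S \<and> card U = t - card S}"
    by (rule bij_betw_same_card[symmetric])
  also have "\<dots> = card (A - S) choose (t - card S)" using n_subsets[of "A - S"] assms(1) by simp
  also have "card (A - S) = card A - card S" using card_Diff_subset[OF fS assms(2)] .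
  finally show ?thesis .
qed

lemma card_filter_sum:
  assumes "finite A" shows "card {x\<in>A. P x} = (\<Sum>x\<in>A. if P x then 1 else 0 :: nat)"
proof -
  have "{x\<in>A. P x} = A \<inter> {x. P x}" by blast
  thus ?thesis using assms by (simp add: sum.If_cases)
qed

lemma steiner_count:
  assumes st: "steiner_system t k n N B" and SN: "S \<subseteq> N" and St: "card S \<le> t"
  shows "card {b\<in>B. S \<subseteq> b} * ((k - card S) choose (t - card S)) = (n - card S) choose (t - card S)"
proof -
  have fN: "finite N" and cN: "card N = n" and Bk: "\<forall>b\<in>B. b \<subseteq> N \<and> card b = k"
    and ex1: "\<And>T. T \<subseteq> N \<Longrightarrow> card T = t \<Longrightarrow> \<exists>!b. b \<in> B \<and> T \<subseteq> b"
    using st unfolding steiner_system_def by auto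
  have fB: "finite B" using Bk fN by (meson Pow_iff finite_Pow_iff finite_subset subsetI)
  define TT where "TT = {T. S \<subseteq> T \<and> T \<subseteq> N \<and> card T = t}"
  have fTT: "finite TT" unfolding TT_def using fN
    by (rule rev_finite_subset[OF finite_Pow_iff[THEN iffD2]]) auto
  have one: "card {b\<in>B. T \<subseteq> b} = 1" if "T \<in> TT" for T
  proof -
    from ex1[of T] that obtain b0 where "b0 \<in> B" "T \<subseteq> b0" "\<And>b. b \<in> B \<and> T \<subseteq> b \<Longrightarrow> b = b0"
      unfolding TT_def by blast
    hence "{b\<in>B. T \<subseteq> b} = {b0}" by blast
    thus ?thesis by simp
  qed
  have inner: "card {T\<in>TT. T \<subseteq> b} = (if S \<subseteq> b then (k - card S) choose (t - card S) else 0)"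
    if "b \<in> B" for b
  proof (cases "S \<subseteq> b")
    case True
    have "{T\<in>TT. T \<subseteq> b} = {T. S \<subseteq> T \<and> T \<subseteq> b \<and> card T = t}"
      unfolding TT_def using Bk that by blast
    moreover have "finite b" using Bk that fN finite_subset by blast
    ultimately show ?thesis using card_supersets[of b S t] True St Bk that by simp
  next
    case False
    have e: "{T\<in>TT. T \<subseteq> b} = {}" using False unfolding TT_def by blast
    show ?thesis by (subst e) (simp add: False)
  qed
  have "card TT = (\<Sum>T\<in>TT. card {b\<in>B. T \<subseteq> b})" using one by simp
  also have "\<dots> = (\<Sum>T\<in>TT. \<Sum>b\<in>B. if T \<subseteq> b then 1 else 0)"
    using card_filter_sum[OF fB] by simp
  also have "\<dots> = (\<Sum>b\<in>B. \<Sum>T\<in>TT. if T \<subseteq> b then 1 else 0)" by (rule sum.swap)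
  also have "\<dots> = (\<Sum>b\<in>B. card {T\<in>TT. T \<subseteq> b})"
    using card_filter_sum[OF fTT] by simp
  also have "\<dots> = (\<Sum>b\<in>B. if S \<subseteq> b then (k - card S) choose (t - card S) else 0)"
    using inner by simp
  also have "\<dots> = (\<Sum>b\<in>B. (if S \<subseteq> b then 1 else 0) * ((k - card S) choose (t - card S)))"
    by (rule sum.cong) auto
  also have "\<dots> = card {b\<in>B. S \<subseteq> b} * ((k - card S) choose (t - card S))"
    using card_filter_sum[OF fB, of "\<lambda>b. S \<subseteq> b"] by (simp add: sum_distrib_right)
  finally have "card TT = card {b\<in>B. S \<subseteq> b} * ((k - card S) choose (t - card S))" .
  moreover have "card TT = (n - card S) choose (t - card S)"
    unfolding TT_def using card_supersets[OF fN SN St] cN by simp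
  ultimately show ?thesis by simp
qed



definition ext0 :: "nat set \<Rightarrow> (nat \<Rightarrow> nat) \<Rightarrow> nat \<Rightarrow> nat" where
  "ext0 S f = (\<lambda>i. if i \<in> S then f i else 0)"

lemma words_supp_eq:
  assumes S: "S \<subseteq> {1..n}" and q: "q \<ge> 1"
  shows "{x\<in>words q n. supp n x = S} = ext0 S ` (PiE S (\<lambda>_. {1..<q}))"
proof
  show "{x\<in>words q n. supp n x = S} \<subseteq> ext0 S ` (PiE S (\<lambda>_. {1..<q}))"
  proof
    fix x assume x: "x \<in> {x\<in>words q n. supp n x = S}"
    have w1: "\<And>i. i \<in> {1..n} \<Longrightarrow> x i < q" and w2: "\<And>i. i \<notin> {1..n} \<Longrightarrow> x i = 0"
      using x unfolding words_def by blast+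
    have s: "{i\<in>{1..n}. x i \<noteq> 0} = S" using x unfolding supp_def by blast
    have "x = ext0 S (restrict x S)"
    proof
      fix i show "x i = ext0 S (restrict x S) i"
      proof (cases "i \<in> S")
        case True thus ?thesis unfolding ext0_def by simp
      next
        case False
        hence "x i = 0" using s w2 by blast
        thus ?thesis using False unfolding ext0_def by simp
      qed
    qed
    moreover have "restrict x S \<in> PiE S (\<lambda>_. {1..<q})"
    proof (rule restrict_PiE_iff[THEN iffD2], rule ballI)
      fix i assume "i \<in> S"
      hence "i \<in> {1..n}" "x i \<noteq> 0" using s by blast+
      thus "x i \<in> {1..<q}" using w1 by simp
    qed
    ultimately show "x \<in> ext0 S ` (PiE S (\<lambda>_. {1..<q}))" by blast
  qed
  show "ext0 S ` (PiE S (\<lambda>_. {1..<q})) \<subseteq> {x\<in>words q n. supp n x = S}"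
  proof
    fix y assume "y \<in> ext0 S ` (PiE S (\<lambda>_. {1..<q}))"
    then obtain f where f: "f \<in> PiE S (\<lambda>_. {1..<q})" and y: "y = ext0 S f" by blast
    have fi: "\<And>i. i \<in> S \<Longrightarrow> f i \<in> {1..<q}" using f by blast
    have "y \<in> words q n" unfolding words_def
    proof (intro CollectI conjI ballI allI impI)
      fix i assume "i \<in> {1..n}"
      show "y i < q"
      proof (cases "i \<in> S")
        case True thus ?thesis using fi[OF True] unfolding y ext0_def by simp
      next
        case False thus ?thesis using q unfolding y ext0_def by simp
      qed
    next
      fix i assume "i \<notin> {1..n}"
      hence "i \<notin> S" using S by blast
      thus "y i = 0" unfolding y ext0_def by simp
    qed
    moreover have "supp n y = S"
    proof (intro set_eqI iffI)
      fix i assume "i \<in> supp n y"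
      hence "y i \<noteq> 0" unfolding supp_def by blast
      thus "i \<in> S" unfolding y ext0_def by (cases "i \<in> S") simp_all
    next
      fix i assume i: "i \<in> S"
      hence "y i \<noteq> 0" using fi[OF i] unfolding y ext0_def by simp
      thus "i \<in> supp n y" using i S unfolding supp_def by blast
    qed
    ultimately show "y \<in> {x\<in>words q n. supp n x = S}" by blast
  qed
qed
lemma inj_ext0: "inj_on (ext0 S) (PiE S A)"
proof
  fix f g assume f: "f \<in> PiE S A" and g: "g \<in> PiE S A" and e: "ext0 S f = ext0 S g"
  show "f = g"
  proof
    fix i show "f i = g i"
    proof (cases "i \<in> S")
      case True thus ?thesis using fun_cong[OF e, of i] unfolding ext0_def by simp
    next
      case False thus ?thesis using f g by (simp add: PiE_def extensional_def)
    qed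
  qed
qed

lemma card_words_supp:
  assumes "S \<subseteq> {1..n}" "q \<ge> 1"
  shows "card {x\<in>words q n. supp n x = S} = (q-1) ^ card S"
    and "finite {x\<in>words q n. supp n x = S}"
proof -
  have fS: "finite S" using assms(1) finite_subset by blast
  show "card {x\<in>words q n. supp n x = S} = (q-1) ^ card S"
    unfolding words_supp_eq[OF assms] card_image[OF inj_ext0] card_PiE[OF fS] by simp
  show "finite {x\<in>words q n. supp n x = S}"
    unfolding words_supp_eq[OF assms] using fS by (intro finite_imageI finite_PiE) auto
qed

lemma card_words_fam:
  assumes q: "q \<ge> 1" and F: "\<forall>S\<in>F. S \<subseteq> {1..n} \<and> card S = w"
  shows "card {x\<in>words q n. supp n x \<in> F} = card F * (q-1) ^ w"
proof -
  have FP: "F \<subseteq> Pow {1..n}" using F by blast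
  have fF: "finite F" by (rule finite_subset[OF FP]) simp
  have eq: "{x\<in>words q n. supp n x \<in> F} = (\<Union>S\<in>F. {x\<in>words q n. supp n x = S})" by blast
  have fin: "\<forall>S\<in>F. finite {x\<in>words q n. supp n x = S}"
    using F card_words_supp(2)[OF _ q] by blast
  have dis: "\<forall>S\<in>F. \<forall>S'\<in>F. S \<noteq> S' \<longrightarrow> {x\<in>words q n. supp n x = S} \<inter> {x\<in>words q n. supp n x = S'} = {}"
    by blast
  have "card {x\<in>words q n. supp n x \<in> F} = (\<Sum>S\<in>F. card {x\<in>words q n. supp n x = S})"
    unfolding eq by (rule card_UN_disjoint[OF fF fin dis])
  also have "\<dots> = (\<Sum>S\<in>F. (q-1)^w)"
  proof (rule sum.cong)
    fix S assume "S \<in> F"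
    thus "card {x\<in>words q n. supp n x = S} = (q-1)^w" using F card_words_supp(1)[OF _ q] by simp
  qed simp
  finally show ?thesis by simp
qed

lemma supp_sub: "supp n x \<subseteq> {1..n}" unfolding supp_def by blast

lemma card_Jq:
  assumes q: "q \<ge> 1"
  shows "card (Jq q n w) = (n choose w) * (q-1)^w"
proof -
  have e1: "Jq q n w = {x\<in>words q n. supp n x \<in> {S. S \<subseteq> {1..n} \<and> card S = w}}"
    unfolding Jq_def wt_def using supp_sub by blast
  have e2: "\<forall>S\<in>{S. S \<subseteq> {1..n} \<and> card S = w}. S \<subseteq> {1..n} \<and> card S = w" by blast
  have e3: "card (Jq q n w) = card {S. S \<subseteq> {1..n} \<and> card S = w} * (q-1)^w"
    unfolding e1 by (rule card_words_fam[OF q e2])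
  have e4: "card {S. S \<subseteq> {1..n} \<and> card S = w} = n choose w"
    using n_subsets[of "{1..n}" w] by simp
  show ?thesis unfolding e3 e4 ..
qed
lemma card_anticode2:
  assumes q: "q \<ge> 1"
  shows "card (anticode2 q n w t) = ((n-t) choose w) * (q-1)^w"
proof -
  let ?F = "{S. S \<subseteq> {t+1..n} \<and> card S = w}"
  have key: "supp n a = {i\<in>{t+1..n}. a i \<noteq> 0}" if "\<forall>i\<in>{1..t}. a i = 0" for a :: "nat \<Rightarrow> nat"
  proof (intro set_eqI iffI)
    fix i assume i: "i \<in> supp n a"
    hence "i \<in> {1..n}" "a i \<noteq> 0" unfolding supp_def by blast+
    moreover hence "i \<notin> {1..t}" using that by metis
    ultimately show "i \<in> {i\<in>{t+1..n}. a i \<noteq> 0}" by simp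
  next
    fix i assume "i \<in> {i\<in>{t+1..n}. a i \<noteq> 0}"
    thus "i \<in> supp n a" unfolding supp_def by simp
  qed
  have eq: "anticode2 q n w t = {x\<in>words q n. supp n x \<in> ?F}"
  proof (intro set_eqI iffI)
    fix a assume "a \<in> anticode2 q n w t"
    hence a: "a \<in> words q n" "\<forall>i\<in>{1..t}. a i = 0" "card {i\<in>{t+1..n}. a i \<noteq> 0} = w"
      unfolding anticode2_def by blast+
    have "supp n a \<in> ?F" unfolding key[OF a(2)] using a(3) by blast
    thus "a \<in> {x\<in>words q n. supp n x \<in> ?F}" using a(1) by blast
  next
    fix a assume "a \<in> {x\<in>words q n. supp n x \<in> ?F}"
    hence a: "a \<in> words q n" "supp n a \<subseteq> {t+1..n}" "card (supp n a) = w" by blast+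
    have z: "\<forall>i\<in>{1..t}. a i = 0"
    proof
      fix i assume i: "i \<in> {1..t}"
      show "a i = 0"
      proof (cases "i \<le> n")
        case True
        show ?thesis
        proof (rule ccontr)
          assume "a i \<noteq> 0"
          moreover have "1 \<le> i" using i by auto
          ultimately have "i \<in> supp n a" unfolding supp_def using True by simp
          thus False using a(2) i by auto
        qed
      next
        case False thus ?thesis using a(1) unfolding words_def by auto
      qed
    qed
    show "a \<in> anticode2 q n w t" unfolding anticode2_def using a(1) z a(3) key[OF z] by simp
  qed
  have e2: "\<forall>S\<in>?F. S \<subseteq> {1..n} \<and> card S = w" by auto
  have e3: "card (anticode2 q n w t) = card ?F * (q-1)^w"
    unfolding eq by (rule card_words_fam[OF q e2])
  have e4: "card ?F = (n - t) choose w" using n_subsets[of "{t+1..n}" w] by simp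
  show ?thesis unfolding e3 e4 ..
qed

lemma supp_split:
  assumes "t \<le> n"
  shows "supp n a = {i\<in>{1..t}. a i \<noteq> 0} \<union> {i\<in>{t+1..n}. a i \<noteq> 0}"
  unfolding supp_def using assms by auto

lemma card_anticode1:
  assumes "q \<ge> 1" "t \<le> k" "k \<le> n"
  shows "card (anticode1 q n k t) = ((n-t) choose (k-t)) * (q-1)^k"
proof -
  let ?F = "{S. {1..t} \<subseteq> S \<and> S \<subseteq> {1..n} \<and> card S = k}"
  have eq: "anticode1 q n k t = {x\<in>words q n. supp n x \<in> ?F}"
  proof (intro set_eqI iffI)
    fix a assume "a \<in> anticode1 q n k t"
    hence a: "a \<in> words q n" "\<forall>i\<in>{1..t}. a i \<noteq> 0" "card {i\<in>{t+1..n}. a i \<noteq> 0} = k - t"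
      unfolding anticode1_def by auto
    have s: "supp n a = {1..t} \<union> {i\<in>{t+1..n}. a i \<noteq> 0}" using supp_split[of t n a] assms a(2) by auto
    have "card (supp n a) = t + (k - t)" unfolding s using a(3)
      by (subst card_Un_disjoint) auto
    thus "a \<in> {x\<in>words q n. supp n x \<in> ?F}" using a assms s unfolding supp_def by auto
  next
    fix a assume "a \<in> {x\<in>words q n. supp n x \<in> ?F}"
    hence a: "a \<in> words q n" "{1..t} \<subseteq> supp n a" "card (supp n a) = k" by auto
    have a2: "\<forall>i\<in>{1..t}. a i \<noteq> 0" using a(2) unfolding supp_def by auto
    have s: "supp n a = {1..t} \<union> {i\<in>{t+1..n}. a i \<noteq> 0}" using supp_split[of t n a] assms a2 by auto
    have "card (supp n a) = t + card {i\<in>{t+1..n}. a i \<noteq> 0}" unfolding s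
      by (subst card_Un_disjoint) auto
    thus "a \<in> anticode1 q n k t" using a a2 unfolding anticode1_def by auto
  qed
  have "card ?F = (n - t) choose (k - t)"
    using card_supersets[of "{1..n}" "{1..t}" k] assms by simp
  thus ?thesis unfolding eq using card_words_fam[OF assms(1), of ?F n k] by simp
qed


lemma steiner_card_B:
  assumes st: "steiner_system t k n N B"
  shows "card B * (k choose t) = n choose t"
  using steiner_count[OF st, of "{}"] by simp

lemma steiner_r:
  assumes st: "steiner_system t k n N B" and i: "i \<in> N"
  shows "card {b\<in>B. i \<in> b} * ((k-1) choose (t-1)) = (n-1) choose (t-1)"
  using steiner_count[OF st, of "{i}"] i st unfolding steiner_system_def by simp

lemma steinerD:
  assumes "steiner_system t k n N B"
  shows "0 < t" "t \<le> k" "k < n" "finite N" "card N = n"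
    "\<And>b. b \<in> B \<Longrightarrow> b \<subseteq> N" "\<And>b. b \<in> B \<Longrightarrow> card b = k"
    "\<And>T. T \<subseteq> N \<Longrightarrow> card T = t \<Longrightarrow> \<exists>!b. b \<in> B \<and> T \<subseteq> b"
  using assms unfolding steiner_system_def by simp_all

lemma steiner_inter:
  assumes st: "steiner_system t k n N B" and b: "b \<in> B" "b' \<in> B" "b \<noteq> b'"
  shows "card (b \<inter> b') < t"
proof (rule ccontr)
  assume "\<not> card (b \<inter> b') < t"
  hence "t \<le> card (b \<inter> b')" by simp
  then obtain T where T: "T \<subseteq> b \<inter> b'" "card T = t" by (rule obtain_subset_with_card_n)
  have bN: "b \<subseteq> N" using steinerD(6)[OF st b(1)] .
  have TN: "T \<subseteq> N" using T(1) bN by blast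
  have u: "\<exists>!c. c \<in> B \<and> T \<subseteq> c" using steinerD(8)[OF st TN T(2)] .
  have "b \<in> B \<and> T \<subseteq> b" "b' \<in> B \<and> T \<subseteq> b'" using T(1) b by blast+
  thus False using b(3) u by blast
qed

lemma steiner_finite:
  assumes st: "steiner_system t k n N B" shows "finite B"
proof -
  have "B \<subseteq> Pow N" using steinerD(6)[OF st] by blast
  moreover have "finite (Pow N)" using steinerD(4)[OF st] by simp
  ultimately show ?thesis by (rule finite_subset)
qed

lemma hdist_le: "hdist n x y \<le> card (supp n x \<union> supp n y)"
  unfolding hdist_def supp_def by (rule card_mono) auto

lemma real_eq_nat:
  assumes "real c = real a / real b" "0 < b"
  shows "c * b = a"
proof -
  have "real c * real b = real a" using assms by (simp add: field_simps)
  thus ?thesis by (metis of_nat_eq_iff of_nat_mult)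
qed

lemma choose_less:
  assumes "0 < t" "t \<le> k" "k < n"
  shows "k choose t < n choose t"
proof -
  obtain t' where t: "t = Suc t'" using assms by (cases t) auto
  have "(Suc k choose t) = (k choose t) + (k choose t')" unfolding t by simp
  moreover have "0 < k choose t'" using assms t by simp
  moreover have "Suc k choose t \<le> n choose t" using assms by (intro binomial_right_mono) simp
  ultimately show ?thesis by linarith
qed

lemma steiner_B2:
  assumes st: "steiner_system t k n N B"
  shows "card B \<ge> 2"
proof (rule ccontr)
  assume "\<not> card B \<ge> 2"
  hence c: "card B \<le> 1" by simp
  have a: "0 < t" "t \<le> k" "k < n" using steinerD(1-3)[OF st] by auto
  have e: "card B * (k choose t) = n choose t" using steiner_card_B[OF st] .
  have l: "k choose t < n choose t" using choose_less[OF a] .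
  have "card B * (k choose t) \<le> 1 * (k choose t)" using c by (rule mult_right_mono) simp
  thus False using e l by simp
qed

lemma packing_steiner:
  assumes a: "0 < t" "t \<le> k" "k < n" and fD: "finite D"
    and Dk: "\<forall>b\<in>D. b \<subseteq> {1..n} \<and> card b = k"
    and Dint: "\<forall>b\<in>D. \<forall>b'\<in>D. b \<noteq> b' \<longrightarrow> card (b \<inter> b') < t"
    and cD: "card D * (k choose t) = n choose t"
  shows "steiner_system t k n {1..n} D"
proof -
  have fb: "finite b" if "b \<in> D" for b
  proof -
    have "b \<subseteq> {1..n}" using Dk that by blast
    thus ?thesis by (rule finite_subset) simp
  qed
  have big: "t \<le> card (b \<inter> b')" if "b \<in> D" "T \<subseteq> b" "T \<subseteq> b'" "card T = t" for b b' T
  proof -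
    have "finite (b \<inter> b')" using fb[OF that(1)] by simp
    moreover have "T \<subseteq> b \<inter> b'" using that by blast
    ultimately have "card T \<le> card (b \<inter> b')" by (rule card_mono)
    thus ?thesis using that(4) by simp
  qed
  define A where "A b = {T. T \<subseteq> b \<and> card T = t}" for b :: "nat set"
  define U where "U = (\<Union>b\<in>D. A b)"
  define all where "all = {T. T \<subseteq> {1..n} \<and> card T = t}"
  have fA: "\<forall>b\<in>D. finite (A b)"
  proof
    fix b assume b: "b \<in> D"
    have "A b \<subseteq> Pow b" unfolding A_def by blast
    moreover have "finite (Pow b)" using fb[OF b] by simp
    ultimately show "finite (A b)" by (rule finite_subset)
  qed
  have disj: "\<forall>b\<in>D. \<forall>b'\<in>D. b \<noteq> b' \<longrightarrow> A b \<inter> A b' = {}"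
  proof (intro ballI impI)
    fix b b' assume bb: "b \<in> D" "b' \<in> D" "b \<noteq> b'"
    show "A b \<inter> A b' = {}"
    proof (rule ccontr)
      assume "A b \<inter> A b' \<noteq> {}"
      then obtain T where "T \<subseteq> b" "T \<subseteq> b'" "card T = t" unfolding A_def by blast
      hence "t \<le> card (b \<inter> b')" using big bb(1) by blast
      moreover have "card (b \<inter> b') < t" using Dint bb by blast
      ultimately show False by simp
    qed
  qed
  have "card U = (\<Sum>b\<in>D. card (A b))" unfolding U_def by (rule card_UN_disjoint[OF fD fA disj])
  also have "\<dots> = (\<Sum>b\<in>D. k choose t)"
  proof (rule sum.cong)
    fix b assume b: "b \<in> D"
    have "card (A b) = card b choose t" unfolding A_def by (rule n_subsets[OF fb[OF b]])
    thus "card (A b) = k choose t" using Dk b by simp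
  qed simp
  also have "\<dots> = card D * (k choose t)" by simp
  also have "\<dots> = card all" unfolding all_def using cD n_subsets[of "{1..n}" t] by simp
  finally have cU: "card U = card all" .
  have sub: "U \<subseteq> all" unfolding U_def all_def A_def using Dk by blast
  have fall: "finite all"
  proof -
    have "all \<subseteq> Pow {1..n}" unfolding all_def by blast
    thus ?thesis by (rule finite_subset) simp
  qed
  have Ueq: "U = all" by (rule card_subset_eq[OF fall sub cU])
  show ?thesis unfolding steiner_system_def
  proof (intro conjI allI impI)
    fix T assume T: "T \<subseteq> {1..n} \<and> card T = t"
    hence "T \<in> U" unfolding Ueq all_def by blast
    then obtain b where b: "b \<in> D" "T \<subseteq> b" unfolding U_def A_def by blast
    show "\<exists>!b. b \<in> D \<and> T \<subseteq> b"
    proof (rule ex1I[of _ b])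
      show "b \<in> D \<and> T \<subseteq> b" using b by blast
      fix b' assume b': "b' \<in> D \<and> T \<subseteq> b'"
      show "b' = b"
      proof (rule ccontr)
        assume ne: "b' \<noteq> b"
        have "t \<le> card (b' \<inter> b)" using big[of b' T b] b' b T by blast
        moreover have "card (b' \<inter> b) < t" using Dint b' b(1) ne by blast
        ultimately show False by simp
      qed
    qed
  next
    show "\<forall>b\<in>D. b \<subseteq> {1..n} \<and> card b = k" using Dk .
  qed (use a in simp_all)
qed

lemma part3a:
  assumes a: "0 < t" "t \<le> k" "k < n" and nos: "\<not> (\<exists>(N::nat set) B. steiner_system t k n N B)"
  shows "\<not> (\<exists>C. is_code q n k (2*k - t + 1) C \<and> real (card C) = real (n choose t) / real (k choose t))"
proof
  assume "\<exists>C. is_code q n k (2*k - t + 1) C \<and> real (card C) = real (n choose t) / real (k choose t)"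
  then obtain C where C: "is_code q n k (2*k - t + 1) C" and cc: "real (card C) = real (n choose t) / real (k choose t)"
    by blast
  have cC: "card C * (k choose t) = n choose t" using real_eq_nat[OF cc] a by simp
  have CJ: "C \<subseteq> Jq q n k" and fC: "finite C" and dist: "\<forall>x\<in>C. \<forall>y\<in>C. x \<noteq> y \<longrightarrow> hdist n x y \<ge> 2*k - t + 1"
    using C unfolding is_code_def by auto
  have sk: "supp n x \<subseteq> {1..n} \<and> card (supp n x) = k" if "x \<in> C" for x
    using CJ that unfolding Jq_def wt_def supp_def by auto
  have inj: "inj_on (supp n) C"
  proof
    fix x y assume xy: "x \<in> C" "y \<in> C" "supp n x = supp n y"
    show "x = y"
    proof (rule ccontr)
      assume "x \<noteq> y"
      hence "hdist n x y \<ge> 2*k - t + 1" using dist xy by blast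
      moreover have "hdist n x y \<le> k" using hdist_le[of n x y] xy sk by simp
      ultimately show False using a by linarith
    qed
  qed
  have "steiner_system t k n {1..n} (supp n ` C)"
  proof (rule packing_steiner[OF a])
    show "finite (supp n ` C)" using fC by simp
    show "\<forall>b\<in>supp n ` C. b \<subseteq> {1..n} \<and> card b = k" using sk by blast
    show "card (supp n ` C) * (k choose t) = n choose t" using cC card_image[OF inj] by simp
    show "\<forall>b\<in>supp n ` C. \<forall>b'\<in>supp n ` C. b \<noteq> b' \<longrightarrow> card (b \<inter> b') < t"
    proof (intro ballI impI)
      fix b b' assume "b \<in> supp n ` C" "b' \<in> supp n ` C" "b \<noteq> b'"
      then obtain x y where xy: "x \<in> C" "y \<in> C" "b = supp n x" "b' = supp n y" "x \<noteq> y" by blast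
      have "hdist n x y \<ge> 2*k - t + 1" using dist xy by blast
      moreover have "hdist n x y \<le> card (b \<union> b')" using hdist_le[of n x y] xy by simp
      moreover have "card (b \<union> b') + card (b \<inter> b') = k + k"
        using card_Un_Int[of b b'] sk xy finite_subset[of _ "{1..n}"] by auto
      ultimately show "card (b \<inter> b') < t" using a by linarith
    qed
  qed
  thus False using nos by blast
qed

lemma cardB_anticode:
  assumes st: "steiner_system t k n N B"
  shows "card B * ((n-t) choose (k-t)) = n choose k"
proof -
  have a: "0 < t" "t \<le> k" "k < n" using steinerD(1-3)[OF st] by auto
  have "(n choose k) * (k choose t) = (n choose t) * ((n - t) choose (k - t))"
    using choose_mult[of t k n] a by simp
  also have "\<dots> = card B * ((n-t) choose (k-t)) * (k choose t)" using steiner_card_B[OF st] by simp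
  finally show ?thesis using a by simp
qed

lemma r_real:
  assumes st: "steiner_system t k n N B" and i: "i \<in> N"
  shows "real (card {b\<in>B. i \<in> b}) = real ((n-1) choose (t-1)) / real ((k-1) choose (t-1))"
proof -
  have a: "0 < t" "t \<le> k" "k < n" using steinerD(1-3)[OF st] by auto
  have "0 < (k-1) choose (t-1)" using a by simp
  moreover have "real (card {b\<in>B. i \<in> b}) * real ((k-1) choose (t-1)) = real ((n-1) choose (t-1))"
    using steiner_r[OF st i] by (metis of_nat_mult)
  ultimately show ?thesis by (simp add: field_simps)
qed

lemma B_real:
  assumes st: "steiner_system t k n N B"
  shows "real (card B) = real (n choose t) / real (k choose t)"
proof -
  have a: "0 < t" "t \<le> k" "k < n" using steinerD(1-3)[OF st] by auto
  have "0 < k choose t" using a by simp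
  moreover have "real (card B) * real (k choose t) = real (n choose t)"
    using steiner_card_B[OF st] by (metis of_nat_mult)
  ultimately show ?thesis by (simp add: field_simps)
qed

lemma part3b:
  assumes a: "0 < t" "t \<le> k" "k < n" and nos: "\<not> (\<exists>(N::nat set) B. steiner_system t k n N B)"
  shows "\<not> (\<exists>C. is_code q n (n-k) (n - t + 1) C \<and> real (card C) = real (n choose t) / real (k choose t))"
proof
  assume "\<exists>C. is_code q n (n-k) (n - t + 1) C \<and> real (card C) = real (n choose t) / real (k choose t)"
  then obtain C where C: "is_code q n (n-k) (n - t + 1) C" and cc: "real (card C) = real (n choose t) / real (k choose t)"
    by blast
  have cC: "card C * (k choose t) = n choose t" using real_eq_nat[OF cc] a by simp
  have CJ: "C \<subseteq> Jq q n (n-k)" and fC: "finite C" and dist: "\<forall>x\<in>C. \<forall>y\<in>C. x \<noteq> y \<longrightarrow> hdist n x y \<ge> n - t + 1"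
    using C unfolding is_code_def by auto
  have sk: "supp n x \<subseteq> {1..n} \<and> card (supp n x) = n - k" if "x \<in> C" for x
    using CJ that unfolding Jq_def wt_def supp_def by auto
  define cs where "cs = (\<lambda>c. {1..n} - supp n c)"
  have csk: "cs x \<subseteq> {1..n} \<and> card (cs x) = k" if "x \<in> C" for x
  proof -
    have s: "supp n x \<subseteq> {1..n}" "card (supp n x) = n - k" using sk[OF that] by auto
    have f: "finite (supp n x)" using s(1) by (rule finite_subset) simp
    have "card ({1..n} - supp n x) = n - (n - k)" using card_Diff_subset[OF f s(1)] s(2) by simp
    thus ?thesis unfolding cs_def using a by auto
  qed
  have bck: "supp n x = {1..n} - cs x" if "x \<in> C" for x
    using sk[OF that] unfolding cs_def by auto
  have inj: "inj_on cs C"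
  proof
    fix x y assume xy: "x \<in> C" "y \<in> C" "cs x = cs y"
    show "x = y"
    proof (rule ccontr)
      assume "x \<noteq> y"
      hence "hdist n x y \<ge> n - t + 1" using dist xy by blast
      moreover have "supp n x = supp n y" using bck xy by metis
      moreover have "hdist n x y \<le> card (supp n x \<union> supp n y)" using hdist_le .
      ultimately show False using a sk xy by simp
    qed
  qed
  have "steiner_system t k n {1..n} (cs ` C)"
  proof (rule packing_steiner[OF a])
    show "finite (cs ` C)" using fC by simp
    show "\<forall>b\<in>cs ` C. b \<subseteq> {1..n} \<and> card b = k" using csk by blast
    show "card (cs ` C) * (k choose t) = n choose t" using cC card_image[OF inj] by simp
    show "\<forall>b\<in>cs ` C. \<forall>b'\<in>cs ` C. b \<noteq> b' \<longrightarrow> card (b \<inter> b') < t"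
    proof (intro ballI impI)
      fix b b' assume "b \<in> cs ` C" "b' \<in> cs ` C" "b \<noteq> b'"
      then obtain x y where xy: "x \<in> C" "y \<in> C" "b = cs x" "b' = cs y" "x \<noteq> y" by blast
      have "hdist n x y \<ge> n - t + 1" using dist xy by blast
      moreover have "hdist n x y \<le> card (supp n x \<union> supp n y)" using hdist_le .
      moreover have "supp n x \<union> supp n y = {1..n} - (b \<inter> b')" using bck xy by auto
      moreover have "card ({1..n} - (b \<inter> b')) = n - card (b \<inter> b')"
        using csk xy by (subst card_Diff_subset) (auto intro: finite_subset)
      ultimately have "n - t + 1 \<le> n - card (b \<inter> b')" by simp
      thus "card (b \<inter> b') < t" using a by linarith
    qed
  qed
  thus False using nos by blast
qed

lemma part1:
  assumes st: "steiner_system t k n {1..n} B"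
    and q: "real q \<ge> real ((n-1) choose (t-1)) / real ((k-1) choose (t-1)) + 1"
  shows "\<exists>C. is_code q n k (2*k - t + 1) C
               \<and> real (card C) = real (n choose t) / real (k choose t)
               \<and> card C * card (anticode1 q n k t) = card (Jq q n k)
               \<and> supp n ` C = B"
proof -
  have a: "0 < t" "t \<le> k" "k < n" using steinerD(1-3)[OF st] by auto
  have bsub: "\<And>b. b \<in> B \<Longrightarrow> b \<subseteq> {1..n}" using steinerD(6)[OF st] .
  have bk: "\<And>b. b \<in> B \<Longrightarrow> card b = k" using steinerD(7)[OF st] .
  have bfin: "\<And>b. b \<in> B \<Longrightarrow> finite b" using bsub finite_subset[of _ "{1..n}"] by blast
  have fB: "finite B" using steiner_finite[OF st] .
  have rq: "card {b\<in>B. i \<in> b} + 1 \<le> q" if "i \<in> {1..n}" for i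
  proof -
    have "real (card {b\<in>B. i \<in> b}) + 1 \<le> real q" using r_real[OF st that] q by simp
    thus ?thesis by linarith
  qed
  have "\<forall>i. \<exists>h. bij_betw h {b\<in>B. i \<in> b} {0..<card {b\<in>B. i \<in> b}}"
    using fB by (intro allI ex_bij_betw_finite_nat) simp
  then obtain H where H: "\<And>i. bij_betw (H i) {b\<in>B. i \<in> b} {0..<card {b\<in>B. i \<in> b}}"
    by metis
  define cw where "cw b = (\<lambda>i. if i \<in> b then H i b + 1 else 0)" for b
  have suppcw: "supp n (cw b) = b" if "b \<in> B" for b
  proof -
    have "b \<subseteq> {1..n}" using bsub[OF that] .
    thus ?thesis unfolding supp_def cw_def by auto
  qed
  have wcw: "cw b \<in> Jq q n k" if b: "b \<in> B" for b
  proof -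
    have "cw b \<in> words q n" unfolding words_def
    proof (intro CollectI conjI allI ballI impI)
      fix i assume i: "i \<in> {1..n}"
      show "cw b i < q"
      proof (cases "i \<in> b")
        case True
        hence "H i b \<in> {0..<card {b\<in>B. i \<in> b}}" using H[of i] b bij_betwE by blast
        thus ?thesis using rq[OF i] True unfolding cw_def by simp
      next
        case False thus ?thesis using rq[OF i] unfolding cw_def by simp
      qed
    next
      fix i :: nat assume "i \<notin> {1..n}"
      hence "i \<notin> b" using bsub[OF b] by blast
      thus "cw b i = 0" unfolding cw_def by simp
    qed
    thus ?thesis unfolding Jq_def wt_def using suppcw[OF b] bk[OF b] by simp
  qed
  have inj: "inj_on cw B" by (metis inj_onI suppcw)
  have dist: "hdist n (cw b) (cw b') \<ge> 2*k - t + 1" if bb: "b \<in> B" "b' \<in> B" "b \<noteq> b'" for b b'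
  proof -
    have "{i\<in>{1..n}. cw b i \<noteq> cw b' i} = b \<union> b'"
    proof (intro set_eqI iffI)
      fix i assume "i \<in> {i\<in>{1..n}. cw b i \<noteq> cw b' i}"
      thus "i \<in> b \<union> b'" unfolding cw_def by (auto split: if_splits)
    next
      fix i assume i: "i \<in> b \<union> b'"
      have "H i b \<noteq> H i b'" if "i \<in> b" "i \<in> b'"
        using H[of i] bb that unfolding bij_betw_def inj_on_def by blast
      moreover have "i \<in> {1..n}" using i bsub[OF bb(1)] bsub[OF bb(2)] by blast
      ultimately show "i \<in> {i\<in>{1..n}. cw b i \<noteq> cw b' i}" using i unfolding cw_def by auto
    qed
    moreover have "card (b \<union> b') + card (b \<inter> b') = k + k"
      using card_Un_Int[OF bfin[OF bb(1)] bfin[OF bb(2)]] bk[OF bb(1)] bk[OF bb(2)] by simp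
    moreover have "card (b \<inter> b') < t" using steiner_inter[OF st bb] .
    ultimately have "hdist n (cw b) (cw b') = card (b \<union> b')" "card (b \<union> b') + card (b \<inter> b') = k + k"
      "card (b \<inter> b') < t" unfolding hdist_def by simp_all
    thus ?thesis using a by linarith
  qed
  define C where "C = cw ` B"
  have cC: "card C = card B" unfolding C_def using card_image[OF inj] .
  have q1: "q \<ge> 1" using rq[of 1] a by auto
  show ?thesis
  proof (intro exI conjI)
    show "is_code q n k (2*k - t + 1) C" unfolding is_code_def
    proof (intro conjI)
      show "C \<subseteq> Jq q n k" unfolding C_def using wcw by blast
      show "finite C" unfolding C_def using fB by simp
      show "2 \<le> card C" using cC steiner_B2[OF st] by simp
      show "\<forall>x\<in>C. \<forall>y\<in>C. x \<noteq> y \<longrightarrow> 2 * k - t + 1 \<le> hdist n x y"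
        unfolding C_def using dist by blast
    qed
    show "real (card C) = real (n choose t) / real (k choose t)" using cC B_real[OF st] by simp
    show "card C * card (anticode1 q n k t) = card (Jq q n k)"
      unfolding card_anticode1[OF q1 a(2) less_imp_le[OF a(3)]] card_Jq[OF q1] cC
      using cardB_anticode[OF st] by (metis mult.assoc)
    show "supp n ` C = B" unfolding C_def image_image using suppcw by simp
  qed
qed

lemma part2:
  assumes st: "steiner_system t k n {1..n} B"
    and q: "real q \<ge> real (n choose t) / real (k choose t)
                     - real ((n-1) choose (t-1)) / real ((k-1) choose (t-1)) + 1"
  shows "\<exists>C. is_code q n (n-k) (n - t + 1) C
               \<and> real (card C) = real (n choose t) / real ((n - (n-k)) choose t)
               \<and> card C * card (anticode2 q n (n-k) t) = card (Jq q n (n-k))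
               \<and> (\<lambda>c. {1..n} - supp n c) ` C = B"
proof -
  have a: "0 < t" "t \<le> k" "k < n" using steinerD(1-3)[OF st] by auto
  have bsub: "\<And>b. b \<in> B \<Longrightarrow> b \<subseteq> {1..n}" using steinerD(6)[OF st] .
  have bk: "\<And>b. b \<in> B \<Longrightarrow> card b = k" using steinerD(7)[OF st] .
  have bfin: "\<And>b. b \<in> B \<Longrightarrow> finite b" using bsub finite_subset[of _ "{1..n}"] by blast
  have fB: "finite B" using steiner_finite[OF st] .
  have rq: "card {b\<in>B. i \<notin> b} + 1 \<le> q" if "i \<in> {1..n}" for i
  proof -
    have "{b\<in>B. i \<notin> b} = B - {b\<in>B. i \<in> b}" by blast
    hence "card {b\<in>B. i \<notin> b} = card B - card {b\<in>B. i \<in> b}"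
      using fB by (simp add: card_Diff_subset)
    moreover have "card {b\<in>B. i \<in> b} \<le> card B" using fB by (intro card_mono) auto
    ultimately have "real (card {b\<in>B. i \<notin> b}) = real (card B) - real (card {b\<in>B. i \<in> b})"
      by simp
    hence "real (card {b\<in>B. i \<notin> b}) + 1 \<le> real q" using r_real[OF st that] B_real[OF st] q by simp
    thus ?thesis by linarith
  qed
  have "\<forall>i. \<exists>h. bij_betw h {b\<in>B. i \<notin> b} {0..<card {b\<in>B. i \<notin> b}}"
    using fB by (intro allI ex_bij_betw_finite_nat) simp
  then obtain H where H: "\<And>i. bij_betw (H i) {b\<in>B. i \<notin> b} {0..<card {b\<in>B. i \<notin> b}}"
    by metis
  define cw where "cw b = (\<lambda>i. if i \<in> {1..n} \<and> i \<notin> b then H i b + 1 else 0)" for b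
  have suppcw: "supp n (cw b) = {1..n} - b" for b
    unfolding supp_def cw_def by auto
  have bck: "{1..n} - supp n (cw b) = b" if "b \<in> B" for b
    using bsub[OF that] unfolding suppcw by auto
  have wcw: "cw b \<in> Jq q n (n-k)" if b: "b \<in> B" for b
  proof -
    have "cw b \<in> words q n" unfolding words_def
    proof (intro CollectI conjI allI ballI impI)
      fix i assume i: "i \<in> {1..n}"
      show "cw b i < q"
      proof (cases "i \<notin> b")
        case True
        hence "H i b \<in> {0..<card {b\<in>B. i \<notin> b}}" using H[of i] b bij_betwE by blast
        thus ?thesis using rq[OF i] True i unfolding cw_def by simp
      next
        case False thus ?thesis using rq[OF i] unfolding cw_def by simp
      qed
    next
      fix i :: nat assume "i \<notin> {1..n}" thus "cw b i = 0" unfolding cw_def by auto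
    qed
    moreover have "card ({1..n} - b) = n - k" using card_Diff_subset[OF bfin[OF b] bsub[OF b]] bk[OF b] by simp
    ultimately show ?thesis unfolding Jq_def wt_def using suppcw[of b] by simp
  qed
  have inj: "inj_on cw B" by (metis inj_onI bck)
  have dist: "hdist n (cw b) (cw b') \<ge> n - t + 1" if bb: "b \<in> B" "b' \<in> B" "b \<noteq> b'" for b b'
  proof -
    have "{i\<in>{1..n}. cw b i \<noteq> cw b' i} = {1..n} - (b \<inter> b')"
    proof (intro set_eqI iffI)
      fix i assume "i \<in> {i\<in>{1..n}. cw b i \<noteq> cw b' i}"
      thus "i \<in> {1..n} - (b \<inter> b')" unfolding cw_def by (auto split: if_splits)
    next
      fix i assume i: "i \<in> {1..n} - (b \<inter> b')"
      have "H i b \<noteq> H i b'" if "i \<notin> b" "i \<notin> b'"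
        using H[of i] bb that unfolding bij_betw_def inj_on_def by blast
      thus "i \<in> {i\<in>{1..n}. cw b i \<noteq> cw b' i}" using i unfolding cw_def by auto
    qed
    moreover have "card ({1..n} - (b \<inter> b')) = n - card (b \<inter> b')"
    proof -
      have "b \<inter> b' \<subseteq> {1..n}" using bsub[OF bb(1)] by blast
      moreover have "finite (b \<inter> b')" using bfin[OF bb(1)] by simp
      ultimately show ?thesis using card_Diff_subset[of "b \<inter> b'" "{1..n}"] by simp
    qed
    moreover have "card (b \<inter> b') < t" using steiner_inter[OF st bb] .
    ultimately have "hdist n (cw b) (cw b') = n - card (b \<inter> b')"
      "card (b \<inter> b') < t" unfolding hdist_def by simp_all
    thus ?thesis using a by linarith
  qed
  define C where "C = cw ` B"
  have cC: "card C = card B" unfolding C_def using card_image[OF inj] .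
  have q1: "q \<ge> 1" using rq[of 1] a by auto
  have nk: "n - (n - k) = k" using a by simp
  have ch1: "(n - t) choose (n - k) = (n-t) choose (k-t)"
    using binomial_symmetric[of "k-t" "n-t"] a by (simp add: diff_diff_eq)
  have ch2: "n choose (n - k) = n choose k" using binomial_symmetric[of k n] a by simp
  show ?thesis
  proof (intro exI conjI)
    show "is_code q n (n-k) (n - t + 1) C" unfolding is_code_def
    proof (intro conjI)
      show "C \<subseteq> Jq q n (n-k)" unfolding C_def using wcw by blast
      show "finite C" unfolding C_def using fB by simp
      show "2 \<le> card C" using cC steiner_B2[OF st] by simp
      show "\<forall>x\<in>C. \<forall>y\<in>C. x \<noteq> y \<longrightarrow> n - t + 1 \<le> hdist n x y"
        unfolding C_def using dist by blast
    qed
    show "real (card C) = real (n choose t) / real ((n - (n-k)) choose t)"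
      unfolding nk using cC B_real[OF st] by simp
    show "card C * card (anticode2 q n (n-k) t) = card (Jq q n (n-k))"
      unfolding card_anticode2[OF q1] card_Jq[OF q1] cC ch1 ch2
      using cardB_anticode[OF st] by (metis mult.assoc)
    show "(\<lambda>c. {1..n} - supp n c) ` C = B" unfolding C_def image_image using bck by simp
  qed
qed

theorem mainTheorem6:
  fixes t k n :: nat
  assumes "0 < t" "t \<le> k" "k < n"
  shows
   "(\<forall>B. steiner_system t k n {1..n} B \<longrightarrow>
       (\<forall>q::nat. real q \<ge> real ((n-1) choose (t-1)) / real ((k-1) choose (t-1)) + 1 \<longrightarrow>
          (\<exists>C. is_code q n k (2*k - t + 1) C
               \<and> real (card C) = real (n choose t) / real (k choose t)
               \<and> card C * card (anticode1 q n k t) = card (Jq q n k)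
               \<and> supp n ` C = B))
     \<and> (\<forall>q::nat. real q \<ge> real (n choose t) / real (k choose t)
                     - real ((n-1) choose (t-1)) / real ((k-1) choose (t-1)) + 1 \<longrightarrow>
          (\<exists>C. is_code q n (n-k) (n - t + 1) C
               \<and> real (card C) = real (n choose t) / real ((n - (n-k)) choose t)
               \<and> card C * card (anticode2 q n (n-k) t) = card (Jq q n (n-k))
               \<and> (\<lambda>c. {1..n} - supp n c) ` C = B)))
    \<and> ((\<not> (\<exists>(N::nat set) B. steiner_system t k n N B)) \<longrightarrow>
       (\<forall>q::nat.
          \<not> (\<exists>C. is_code q n k (2*k - t + 1) C
                 \<and> real (card C) = real (n choose t) / real (k choose t))
        \<and> \<not> (\<exists>C. is_code q n (n-k) (n - t + 1) C
                 \<and> real (card C) = real (n choose t) / real (k choose t))))"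
proof (intro conjI allI impI)
  fix B q assume "steiner_system t k n {1..n} B"
    "real q \<ge> real ((n-1) choose (t-1)) / real ((k-1) choose (t-1)) + 1"
  thus "\<exists>C. is_code q n k (2*k - t + 1) C
               \<and> real (card C) = real (n choose t) / real (k choose t)
               \<and> card C * card (anticode1 q n k t) = card (Jq q n k)
               \<and> supp n ` C = B" by (rule part1)
next
  fix B q assume "steiner_system t k n {1..n} B"
    "real q \<ge> real (n choose t) / real (k choose t)
                     - real ((n-1) choose (t-1)) / real ((k-1) choose (t-1)) + 1"
  thus "\<exists>C. is_code q n (n-k) (n - t + 1) C
               \<and> real (card C) = real (n choose t) / real ((n - (n-k)) choose t)
               \<and> card C * card (anticode2 q n (n-k) t) = card (Jq q n (n-k))
               \<and> (\<lambda>c. {1..n} - supp n c) ` C = B" by (rule part2)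
next
  fix q assume "\<not> (\<exists>(N::nat set) B. steiner_system t k n N B)"
  thus "\<not> (\<exists>C. is_code q n k (2*k - t + 1) C
                 \<and> real (card C) = real (n choose t) / real (k choose t))"
    by (rule part3a[OF assms])
next
  fix q assume "\<not> (\<exists>(N::nat set) B. steiner_system t k n N B)"
  thus "\<not> (\<exists>C. is_code q n (n-k) (n - t + 1) C
                 \<and> real (card C) = real (n choose t) / real (k choose t))"
    by (rule part3b[OF assms])
qed


end
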